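(* Let $a\ge0$. For $n\ge0$ and $m\le a+n$, let $\lambda_n=(m,a+n-m)$ and $\mu_n=(1,\dots,1,n)$ (with $a$ entries equal to $1$) be compositions of $a+n$, and let $\mathscr{D}_{\mu_n,\lambda_n}$ be the set of minimal-length representatives of the double cosets $\mathfrak{S}_{\mu_n}\backslash\mathfrak{S}_{a+n}/\mathfrak{S}_{\lambda_n}$. Then, regarding $\mathfrak{S}_{a+n}\subseteq\mathfrak{S}_{a+n+1}$ in the standard way, $\mathscr{D}_{\mu_n,\lambda_n}\subseteq\mathscr{D}_{\mu_{n+1},\lambda_{n+1}}$, and for $n\ge m$ the set $\mathscr{D}_{\mu_n,\lambda_n}$ is independent of $n$.
   Context: For a composition $\nu=(\nu_1,\dots,\nu_r)$ of $N$, the standard Young subgroup $\mathfrak{S}_\nu\subseteq\mathfrak{S}_N$ is $\mathfrak{S}_{\{1,\dots,\nu_1\}}\times\mathfrak{S}_{\{\nu_1+1,\dots,\nu_1+\nu_2\}}\times\cdots$. Length is with respect to the simple transpositions $s_i=(i,i+1)$. *)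

theory Defs
  imports "HOL-Combinatorics.Combinatorics"
begin

text \<open>Permutations of {1..N} are functions nat => nat that permute {1..N}.
  The simple transposition s_i is transpose i (i+1).\<close>

definition simple_word :: "nat list \<Rightarrow> (nat \<Rightarrow> nat)" where
  "simple_word is = foldr (\<lambda>i f. transpose i (Suc i) \<circ> f) is id"

definition perm_len :: "nat \<Rightarrow> (nat \<Rightarrow> nat) \<Rightarrow> nat" where
  "perm_len N w = (LEAST k. \<exists>is. length is = k \<and> (\<forall>i\<in>set is. 1 \<le> i \<and> i < N)
                                   \<and> w = simple_word is)"

text \<open>The i-th block (0-based) of a composition.\<close>
definition block :: "nat list \<Rightarrow> nat \<Rightarrow> nat set" where
  "block \<nu> i = {sum_list (take i \<nu>) + 1 .. sum_list (take (Suc i) \<nu>)}"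

definition young :: "nat \<Rightarrow> nat list \<Rightarrow> (nat \<Rightarrow> nat) set" where
  "young N \<nu> = {w. w permutes {1..N} \<and> (\<forall>i<length \<nu>. w ` block \<nu> i = block \<nu> i)}"

definition minreps :: "nat \<Rightarrow> nat list \<Rightarrow> nat list \<Rightarrow> (nat \<Rightarrow> nat) set" where
  "minreps N mu lam = {w. w permutes {1..N} \<and>
      (\<forall>u\<in>young N mu. \<forall>v\<in>young N lam. perm_len N w \<le> perm_len N (u \<circ> w \<circ> v))}"

definition mu_comp :: "nat \<Rightarrow> nat \<Rightarrow> nat list" where
  "mu_comp a n = replicate a 1 @ [n]"

definition lambda_comp :: "nat \<Rightarrow> nat \<Rightarrow> nat \<Rightarrow> nat list" where
  "lambda_comp a n m = [m, a + n - m]"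

end

theory Submission
  imports Defs
begin


definition Inv :: "nat \<Rightarrow> (nat \<Rightarrow> nat) \<Rightarrow> (nat \<times> nat) set" where
  "Inv N w = {(p,q). p \<in> {1..N} \<and> q \<in> {1..N} \<and> p < q \<and> w q < w p}"

definition ninv :: "nat \<Rightarrow> (nat \<Rightarrow> nat) \<Rightarrow> nat" where
  "ninv N w = card (Inv N w)"

lemma finite_Inv: "finite (Inv N w)"
  by (rule finite_subset[of _ "{1..N} \<times> {1..N}"]) (auto simp: Inv_def)

lemma Inv_left_less:
  assumes f: "f permutes {1..N}" and j: "1 \<le> j" "j < N"
    and d: "inv f (Suc j) < inv f j"
  shows "Inv N (transpose j (Suc j) \<circ> f) = Inv N f - {(inv f (Suc j), inv f j)}"
    and "(inv f (Suc j), inv f j) \<in> Inv N f"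
proof -
  let ?P = "inv f j" and ?Q = "inv f (Suc j)"
  have fP: "f ?P = j" and fQ: "f ?Q = Suc j" using permutes_inverses[OF f] by auto
  have PN: "?P \<in> {1..N}" "?Q \<in> {1..N}" using j permutes_in_image[OF permutes_inv[OF f]] by auto
  show "(?Q, ?P) \<in> Inv N f" using PN d fP fQ by (auto simp: Inv_def)
  show "Inv N (transpose j (Suc j) \<circ> f) = Inv N f - {(?Q, ?P)}"
  proof (rule set_eqI, clarify)
    fix p q
    have injf: "inj f" using permutes_inj[OF f] .
    show "((p,q) \<in> Inv N (transpose j (Suc j) \<circ> f)) = ((p,q) \<in> Inv N f - {(?Q, ?P)})"
    proof (cases "(p,q) = (?Q,?P)")
      case True then show ?thesis using fP fQ by (auto simp: Inv_def)
    next
      case False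
      have "p = ?P \<longleftrightarrow> f p = j" "q = ?P \<longleftrightarrow> f q = j" "p = ?Q \<longleftrightarrow> f p = Suc j" "q = ?Q \<longleftrightarrow> f q = Suc j"
        using permutes_inv_eq[OF f] by metis+
      with False d show ?thesis unfolding Inv_def transpose_def
        by (auto dest: injD[OF injf])
    qed
  qed
qed

lemma ninv_left_less:
  assumes f: "f permutes {1..N}" and j: "1 \<le> j" "j < N"
    and d: "inv f (Suc j) < inv f j"
  shows "Suc (ninv N (transpose j (Suc j) \<circ> f)) = ninv N f"
  using Inv_left_less[OF assms] finite_Inv unfolding ninv_def
  by (metis card_Diff1_less card_Suc_Diff1 finite_Inv)

lemma ninv_left_gt:
  assumes f: "f permutes {1..N}" and j: "1 \<le> j" "j < N"
    and d: "inv f j < inv f (Suc j)"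
  shows "ninv N (transpose j (Suc j) \<circ> f) = Suc (ninv N f)"
proof -
  let ?s = "transpose j (Suc j)"
  have sp: "?s permutes {1..N}" using j by (intro permutes_swap_id) auto
  have g: "?s \<circ> f permutes {1..N}" by (rule permutes_compose[OF f sp])
  have ig: "inv (?s \<circ> f) = inv f \<circ> ?s"
    using o_inv_distrib[OF bij_transpose permutes_bij[OF f]] by simp
  have lt: "inv (?s \<circ> f) (Suc j) < inv (?s \<circ> f) j" using d ig by simp
  have "?s \<circ> (?s \<circ> f) = f" by (simp add: comp_assoc[symmetric])
  with ninv_left_less[OF g j lt] show ?thesis by simp
qed

lemma ninv_left_le:
  assumes f: "f permutes {1..N}" and j: "1 \<le> j" "j < N"
  shows "ninv N (transpose j (Suc j) \<circ> f) \<le> Suc (ninv N f)"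
proof -
  have "inv f j \<noteq> inv f (Suc j)" using permutes_inv_eq[OF f] by (metis n_not_Suc_n)
  then consider "inv f (Suc j) < inv f j" | "inv f j < inv f (Suc j)" by linarith
  then show ?thesis
    using ninv_left_less[OF assms] ninv_left_gt[OF assms] by cases force+
qed

lemma simple_word_Cons: "simple_word (i # is) = transpose i (Suc i) \<circ> simple_word is"
  by (simp add: simple_word_def)

lemma simple_word_props:
  assumes "\<forall>i\<in>set is. 1 \<le> i \<and> i < N"
  shows "simple_word is permutes {1..N} \<and> ninv N (simple_word is) \<le> length is"
  using assms
proof (induction "is")
  case Nil
  have "Inv N (simple_word []) = {}" by (auto simp: Inv_def simple_word_def)
  moreover have "simple_word [] permutes {1..N}" by (simp add: simple_word_def permutes_id)
  ultimately show ?case by (simp add: ninv_def)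
next
  case (Cons i "is")
  then have IH: "simple_word is permutes {1..N}" "ninv N (simple_word is) \<le> length is"
    and i: "1 \<le> i" "i < N" by auto
  have sp: "transpose i (Suc i) permutes {1..N}" using i by (intro permutes_swap_id) auto
  have "ninv N (transpose i (Suc i) \<circ> simple_word is) \<le> length (i # is)"
    using ninv_left_le[OF IH(1) i] IH(2) by simp
  then show ?case unfolding simple_word_Cons
    using permutes_compose[OF IH(1) sp] by blast
qed

lemma incr_chain:
  assumes "\<And>i. p \<le> i \<Longrightarrow> i < q \<Longrightarrow> f i \<le> f (Suc i)" "p \<le> q"
  shows "f p \<le> (f q :: nat)"
  using assms(2,1)
proof (induction q rule: dec_induct)
  case base then show ?case by simp
next
  case (step n) then show ?case by (meson le_trans less_Suc_eq)
qed

lemma descent_exists: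
  assumes "p < q" "f q < (f p :: nat)"
  shows "\<exists>i. p \<le> i \<and> i < q \<and> f (Suc i) < f i"
  using incr_chain[of p q f] assms by (meson leI less_imp_le_nat not_le)

lemma ninv0_id:
  assumes f: "f permutes {1..N}" and z: "ninv N f = 0"
  shows "f = id"
proof -
  have e: "Inv N f = {}" using z finite_Inv by (simp add: ninv_def)
  have mono: "f p < f q" if "p \<in> {1..N}" "q \<in> {1..N}" "p < q" for p q
  proof -
    have "\<not> f q < f p" using e that by (auto simp: Inv_def)
    moreover have "f p \<noteq> f q" using permutes_inj[OF f] that by (metis injD less_irrefl)
    ultimately show ?thesis by simp
  qed
  have ge: "x \<le> f x" if "x \<in> {1..N}" for x
    using that
  proof (induction x)
    case 0 then show ?case by simp
  next
    case (Suc x)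
    show ?case
    proof (cases "x = 0")
      case True
      then show ?thesis using Suc.prems permutes_in_image[OF f] by auto
    next
      case False
      then have "x \<in> {1..N}" using Suc.prems by auto
      then show ?thesis using Suc.IH mono[of x "Suc x"] Suc.prems by fastforce
    qed
  qed
  have fi: "inv f permutes {1..N}" using permutes_inv[OF f] .
  have monoi: "inv f p < inv f q" if "p \<in> {1..N}" "q \<in> {1..N}" "p < q" for p q
  proof (rule ccontr)
    assume "\<not> ?thesis"
    then consider "inv f p = inv f q" | "inv f q < inv f p" by linarith
    then show False
    proof cases
      case 1 then show ?thesis using permutes_inverses(1)[OF f, of p] permutes_inverses(1)[OF f, of q] that(3) by simp
    next
      case 2
      have "inv f p \<in> {1..N}" "inv f q \<in> {1..N}" using that permutes_in_image[OF fi] by auto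
      from mono[OF this(2,1) 2] show ?thesis using permutes_inverses[OF f] that by simp
    qed
  qed
  have gei: "x \<le> inv f x" if "x \<in> {1..N}" for x
    using that
  proof (induction x)
    case 0 then show ?case by simp
  next
    case (Suc x)
    show ?case
    proof (cases "x = 0")
      case True
      then show ?thesis using Suc.prems permutes_in_image[OF fi] by auto
    next
      case False
      then have "x \<in> {1..N}" using Suc.prems by auto
      then show ?thesis using Suc.IH monoi[of x "Suc x"] Suc.prems by fastforce
    qed
  qed
  show ?thesis
  proof
    fix x show "f x = id x"
    proof (cases "x \<in> {1..N}")
      case True
      have "f x \<in> {1..N}" using True permutes_in_image[OF f] by auto
      from gei[OF this] have "f x \<le> x" using permutes_inverses[OF f] by simp
      with ge[OF True] show ?thesis by simp
    next
      case False then show ?thesis using permutes_not_in[OF f] by simp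
    qed
  qed
qed

lemma word_exists:
  "f permutes {1..N} \<Longrightarrow> ninv N f = k \<Longrightarrow>
   \<exists>is. length is = k \<and> (\<forall>i\<in>set is. 1 \<le> i \<and> i < N) \<and> f = simple_word is"
proof (induction k arbitrary: f)
  case 0
  then have "f = id" using ninv0_id by blast
  then show ?case by (intro exI[of _ "[]"]) (simp add: simple_word_def)
next
  case (Suc k)
  note f = Suc.prems(1)
  have "Inv N f \<noteq> {}" using Suc.prems(2) by (auto simp: ninv_def)
  then obtain p q where pq: "p \<in> {1..N}" "q \<in> {1..N}" "p < q" "f q < f p" by (auto simp: Inv_def)
  let ?g = "inv f"
  have gq: "?g (f q) = q" and gp: "?g (f p) = p" using permutes_inverses[OF f] by auto
  have "?g (f p) < ?g (f q)" unfolding gq gp using pq(3) .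
  from descent_exists[of "f q" "f p" ?g, OF pq(4) this]
  obtain j where j: "f q \<le> j" "j < f p" "?g (Suc j) < ?g j" by blast
  have jN: "1 \<le> j" "j < N"
  proof -
    have "f q \<in> {1..N}" "f p \<in> {1..N}"
      using permutes_in_image[OF f, THEN iffD2, OF pq(2)] permutes_in_image[OF f, THEN iffD2, OF pq(1)] by auto
    then show "1 \<le> j" "j < N" using j by auto
  qed
  let ?s = "transpose j (Suc j)"
  have sp: "?s permutes {1..N}" using jN by (intro permutes_swap_id) auto
  have g: "?s \<circ> f permutes {1..N}" by (rule permutes_compose[OF f sp])
  have "ninv N (?s \<circ> f) = k" using ninv_left_less[OF f jN j(3)] Suc.prems(2) by simp
  from Suc.IH[OF g this] obtain "is" where ws: "length is = k" "\<forall>i\<in>set is. 1 \<le> i \<and> i < N"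
    "?s \<circ> f = simple_word is" by blast
  have "simple_word (j # is) = ?s \<circ> (?s \<circ> f)" using ws(3) simple_word_Cons by simp
  also have "\<dots> = f" by (simp add: comp_assoc[symmetric])
  finally have "f = simple_word (j # is)" by simp
  then show ?case using ws jN by (intro exI[of _ "j # is"]) auto
qed

lemma perm_len_ninv:
  assumes f: "f permutes {1..N}"
  shows "perm_len N f = ninv N f"
  unfolding perm_len_def
proof (rule Least_equality)
  show "\<exists>is. length is = ninv N f \<and> (\<forall>i\<in>set is. 1 \<le> i \<and> i < N) \<and> f = simple_word is"
    using word_exists[OF f refl] .
  fix k assume "\<exists>is. length is = k \<and> (\<forall>i\<in>set is. 1 \<le> i \<and> i < N) \<and> f = simple_word is"
  then show "ninv N f \<le> k" using simple_word_props by blast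
qed

lemma ninv_inv_le:
  assumes f: "f permutes {1..N}"
  shows "ninv N f \<le> ninv N (inv f)"
proof -
  let ?h = "\<lambda>(p,q). (f q, f p)"
  have "inj_on ?h (Inv N f)" using permutes_inj[OF f]
    by (auto simp: inj_on_def dest: injD)
  moreover have "?h ` Inv N f \<subseteq> Inv N (inv f)"
    using permutes_in_image[OF f] permutes_inverses[OF f] by (auto simp: Inv_def)
  ultimately show ?thesis unfolding ninv_def by (meson card_inj_on_le finite_Inv)
qed

lemma ninv_inv:
  assumes f: "f permutes {1..N}"
  shows "ninv N (inv f) = ninv N f"
  using ninv_inv_le[OF f] ninv_inv_le[OF permutes_inv[OF f]] permutes_inv_inv[OF f] by simp



lemma take_mu: "i \<le> a \<Longrightarrow> sum_list (take i (mu_comp a n)) = i"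
  by (simp add: mu_comp_def sum_list_replicate)

lemma take_mu2: "sum_list (take (Suc a) (mu_comp a n)) = a + n"
  by (simp add: mu_comp_def sum_list_replicate)

lemma block_mu_lt: "i < a \<Longrightarrow> block (mu_comp a n) i = {Suc i}"
  unfolding block_def using take_mu[of i a n] take_mu[of "Suc i" a n] by simp

lemma block_mu_a: "block (mu_comp a n) a = {Suc a..a+n}"
  unfolding block_def using take_mu[of a a n] take_mu2[of a n] by simp

lemma length_mu: "length (mu_comp a n) = Suc a" by (simp add: mu_comp_def)

lemma young_mu:
  assumes "v \<in> young (a+n) (mu_comp a n)"
  shows "v permutes {1..a+n}" "\<And>y. y \<in> {1..a} \<Longrightarrow> v y = y"
proof -
  show "v permutes {1..a+n}" using assms by (simp add: young_def)
  fix y assume y: "y \<in> {1..a}"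
  then have "y - 1 < length (mu_comp a n)" by (auto simp add: length_mu)
  then have "v ` block (mu_comp a n) (y - 1) = block (mu_comp a n) (y - 1)"
    using assms by (simp add: young_def)
  moreover have "block (mu_comp a n) (y - 1) = {y}" using y block_mu_lt[of "y - 1" a n] by auto
  ultimately show "v y = y" by simp
qed

lemma young_mu_s:
  assumes "a < j" "Suc j \<le> a + n"
  shows "transpose j (Suc j) \<in> young (a+n) (mu_comp a n)"
  unfolding young_def
proof (intro CollectI conjI allI impI)
  show "transpose j (Suc j) permutes {1..a+n}" using assms by (intro permutes_swap_id) auto
  fix i assume "i < length (mu_comp a n)"
  then consider "i < a" | "i = a" by (fastforce simp add: length_mu)
  then show "transpose j (Suc j) ` block (mu_comp a n) i = block (mu_comp a n) i"
  proof cases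
    case 1 then show ?thesis using assms by (simp add: block_mu_lt)
  next
    case 2 then show ?thesis using assms by (simp add: block_mu_a)
  qed
qed

lemma block_lam0: "block (lambda_comp a n m) 0 = {1..m}"
  by (simp add: block_def lambda_comp_def)

lemma block_lam1: "m \<le> a + n \<Longrightarrow> block (lambda_comp a n m) 1 = {Suc m..a+n}"
  by (simp add: block_def lambda_comp_def)

lemma young_lam:
  assumes "m \<le> a + n" "v \<in> young (a+n) (lambda_comp a n m)"
  shows "v permutes {1..a+n}" "\<And>y. y \<in> {1..m} \<Longrightarrow> v y \<in> {1..m}"
    "\<And>y. y \<in> {Suc m..a+n} \<Longrightarrow> v y \<in> {Suc m..a+n}"
proof -
  show "v permutes {1..a+n}" using assms by (simp add: young_def)
  have l: "length (lambda_comp a n m) = 2" by (simp add: lambda_comp_def)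
  have "v ` block (lambda_comp a n m) 0 = block (lambda_comp a n m) 0"
       "v ` block (lambda_comp a n m) 1 = block (lambda_comp a n m) 1"
    using assms(2) l by (auto simp: young_def)
  then have i0: "v ` {1..m} = {1..m}" and i1: "v ` {Suc m..a+n} = {Suc m..a+n}"
    using block_lam0 block_lam1[OF assms(1)] by auto
  fix y
  show "y \<in> {1..m} \<Longrightarrow> v y \<in> {1..m}" using i0 by blast
  show "y \<in> {Suc m..a+n} \<Longrightarrow> v y \<in> {Suc m..a+n}" using i1 by blast
qed

lemma young_lam_s:
  assumes "m \<le> a + n" "1 \<le> i" "Suc i \<le> a + n" "Suc i \<le> m \<or> m < i"
  shows "transpose i (Suc i) \<in> young (a+n) (lambda_comp a n m)"
  unfolding young_def
proof (intro CollectI conjI allI impI)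
  show "transpose i (Suc i) permutes {1..a+n}" using assms by (intro permutes_swap_id) auto
  fix k assume "k < length (lambda_comp a n m)"
  then consider "k = 0" | "k = 1" by (fastforce simp: lambda_comp_def)
  then show "transpose i (Suc i) ` block (lambda_comp a n m) k = block (lambda_comp a n m) k"
  proof cases
    case 1
    have "transpose i (Suc i) ` {1..m} = {1..m}" using assms by (intro transpose_image_eq) auto
    then show ?thesis using 1 by (simp only: block_lam0)
  next
    case 2
    have "transpose i (Suc i) ` {Suc m..a+n} = {Suc m..a+n}" using assms by (intro transpose_image_eq) auto
    then show ?thesis using 2 by (simp only: block_lam1[OF assms(1)])
  qed
qed



definition EE :: "nat \<Rightarrow> nat \<Rightarrow> nat \<Rightarrow> (nat \<Rightarrow> nat) set" where
  "EE N a m = {w. w permutes {1..N} \<and>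
     (\<forall>p q. 1 \<le> p \<longrightarrow> p < q \<longrightarrow> q \<le> N \<longrightarrow> w q < w p \<longrightarrow> p \<le> m \<and> m < q \<and> w q \<le> a)}"

lemma ninv_right_less:
  assumes w: "w permutes {1..N}" and i: "1 \<le> i" "i < N" and d: "w (Suc i) < w i"
  shows "ninv N (w \<circ> transpose i (Suc i)) < ninv N w"
proof -
  let ?s = "transpose i (Suc i)"
  have sp: "?s permutes {1..N}" using i by (intro permutes_swap_id) auto
  have x: "w \<circ> ?s permutes {1..N}" by (rule permutes_compose[OF sp w])
  have iw: "inv w permutes {1..N}" by (rule permutes_inv[OF w])
  have ix: "inv (w \<circ> ?s) = ?s \<circ> inv w"
    using o_inv_distrib[OF permutes_bij[OF w] bij_transpose] by simp
  have "inv (inv w) (Suc i) < inv (inv w) i" using d permutes_inv_inv[OF w] by simp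
  from ninv_left_less[OF iw i this] have "Suc (ninv N (?s \<circ> inv w)) = ninv N (inv w)" .
  then have "Suc (ninv N (inv (w \<circ> ?s))) = ninv N w" using ix ninv_inv[OF w] by simp
  then show ?thesis using ninv_inv[OF x] by simp
qed

lemma id_young: "id \<in> young N \<nu>"
  by (simp add: young_def permutes_id)

lemma minreps_sub:
  assumes mN: "m \<le> a + n"
  shows "minreps (a+n) (mu_comp a n) (lambda_comp a n m) \<subseteq> EE (a+n) a m"
proof
  fix w assume "w \<in> minreps (a+n) (mu_comp a n) (lambda_comp a n m)"
  then have w: "w permutes {1..a+n}" and
    mn: "\<And>u v. u \<in> young (a+n) (mu_comp a n) \<Longrightarrow> v \<in> young (a+n) (lambda_comp a n m) \<Longrightarrow>
          perm_len (a+n) w \<le> perm_len (a+n) (u \<circ> w \<circ> v)"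
    by (auto simp: minreps_def)
  have lw: "perm_len (a+n) w = ninv (a+n) w" by (rule perm_len_ninv[OF w])
  have main: "p \<le> m \<and> m < q \<and> w q \<le> a"
    if pq: "1 \<le> p" "p < q" "q \<le> a+n" "w q < w p" for p q
  proof -
    have c1: "p \<le> m \<and> m < q"
    proof (rule ccontr)
      assume nb: "\<not> (p \<le> m \<and> m < q)"
      obtain i where i: "p \<le> i" "i < q" "w (Suc i) < w i" using descent_exists[OF pq(2,4)] by blast
      have iN: "1 \<le> i" "i < a + n" using i pq by auto
      have blk: "Suc i \<le> m \<or> m < i" using nb i by auto
      have sy: "transpose i (Suc i) \<in> young (a+n) (lambda_comp a n m)"
        using young_lam_s[OF mN iN(1) _ blk] iN by simp
      have sp: "transpose i (Suc i) permutes {1..a+n}" using iN by (intro permutes_swap_id) auto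
      have x: "w \<circ> transpose i (Suc i) permutes {1..a+n}" by (rule permutes_compose[OF sp w])
      from mn[OF id_young sy] have "perm_len (a+n) w \<le> perm_len (a+n) (w \<circ> transpose i (Suc i))"
        by simp
      then show False using ninv_right_less[OF w iN i(3)] lw perm_len_ninv[OF x] by simp
    qed
    have c2: "w q \<le> a"
    proof (rule ccontr)
      assume "\<not> w q \<le> a"
      then have aq: "a < w q" by simp
      let ?g = "inv w"
      have gq: "?g (w q) = q" and gp: "?g (w p) = p" using permutes_inverses[OF w] by auto
      have "?g (w p) < ?g (w q)" unfolding gq gp using pq(2) .
      from descent_exists[of "w q" "w p" ?g, OF pq(4) this]
      obtain j where j: "w q \<le> j" "j < w p" "?g (Suc j) < ?g j" by blast
      have wp: "w p \<in> {1..a+n}"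
        using permutes_in_image[OF w, THEN iffD2, of p] pq by auto
      have jN: "1 \<le> j" "j < a + n" "a < j" using j aq wp by auto
      have sy: "transpose j (Suc j) \<in> young (a+n) (mu_comp a n)"
        using young_mu_s[OF jN(3)] jN by simp
      have sp: "transpose j (Suc j) permutes {1..a+n}" using jN by (intro permutes_swap_id) auto
      have x: "transpose j (Suc j) \<circ> w permutes {1..a+n}" by (rule permutes_compose[OF w sp])
      from mn[OF sy id_young] have "perm_len (a+n) w \<le> perm_len (a+n) (transpose j (Suc j) \<circ> w)"
        by simp
      then show False using ninv_left_less[OF w jN(1,2) j(3)] lw perm_len_ninv[OF x] by simp
    qed
    show ?thesis using c1 c2 by blast
  qed
  show "w \<in> EE (a+n) a m" unfolding EE_def using w main by blast
qed

lemma EE_sub_minreps: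
  assumes mN: "m \<le> a + n"
  shows "EE (a+n) a m \<subseteq> minreps (a+n) (mu_comp a n) (lambda_comp a n m)"
proof
  fix w assume "w \<in> EE (a+n) a m"
  then have w: "w permutes {1..a+n}" and
    e: "\<And>p q. 1 \<le> p \<Longrightarrow> p < q \<Longrightarrow> q \<le> a+n \<Longrightarrow> w q < w p \<Longrightarrow> p \<le> m \<and> m < q \<and> w q \<le> a"
    by (auto simp: EE_def)
  have "perm_len (a+n) w \<le> perm_len (a+n) (u \<circ> w \<circ> v)"
    if u: "u \<in> young (a+n) (mu_comp a n)" and v: "v \<in> young (a+n) (lambda_comp a n m)" for u v
  proof -
    note up = young_mu(1)[OF u] and ufix = young_mu(2)[OF u]
    note vp = young_lam(1)[OF mN v] and v1 = young_lam(2)[OF mN v] and v2 = young_lam(3)[OF mN v]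
    have x: "u \<circ> w \<circ> v permutes {1..a+n}" by (intro permutes_compose w up vp)
    have iv: "inv v permutes {1..a+n}" by (rule permutes_inv[OF vp])
    have uhi: "a < u y" if "a < y" "y \<le> a + n" for y
    proof (rule ccontr)
      assume "\<not> a < u y"
      then have "u y \<in> {1..a}"
        using permutes_in_image[OF up, THEN iffD2, of y] that by auto
      then have "u (u y) = u y" by (rule ufix)
      then have "u y = y" using permutes_inj[OF up] by (metis injD)
      then show False using that \<open>\<not> a < u y\<close> by simp
    qed
    let ?h = "\<lambda>(P,Q). (inv v P, inv v Q)"
    have inj: "inj_on ?h (Inv (a+n) w)"
      using permutes_inj[OF iv] by (auto simp: inj_on_def dest: injD)
    have sub: "?h ` Inv (a+n) w \<subseteq> Inv (a+n) (u \<circ> w \<circ> v)"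
    proof clarify
      fix P Q assume "(P,Q) \<in> Inv (a+n) w"
      then have PQ: "1 \<le> P" "P < Q" "Q \<le> a+n" "w Q < w P" by (auto simp: Inv_def)
      from e[OF this] have b: "P \<le> m" "m < Q" "w Q \<le> a" by auto
      let ?P = "inv v P" and ?Q = "inv v Q"
      have vP: "v ?P = P" "v ?Q = Q" using permutes_inverses[OF vp] by auto
      have PN: "?P \<in> {1..a+n}" "?Q \<in> {1..a+n}"
        using permutes_in_image[OF iv, THEN iffD2, of P] permutes_in_image[OF iv, THEN iffD2, of Q] PQ
        by auto
      have Pm: "?P \<le> m"
      proof (rule ccontr)
        assume "\<not> ?P \<le> m"
        then have "v ?P \<in> {Suc m..a+n}" using v2 PN by auto
        then show False using vP b by simp
      qed
      have Qm: "m < ?Q"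
      proof (rule ccontr)
        assume "\<not> m < ?Q"
        then have "v ?Q \<in> {1..m}" using v1 PN by auto
        then show False using vP b by simp
      qed
      have "w Q \<in> {1..a+n}"
        using permutes_in_image[OF w, THEN iffD2, of Q] PQ by auto
      then have wQ: "u (w Q) = w Q" using b ufix by auto
      have wP: "w Q < u (w P)"
      proof (cases "w P \<le> a")
        case True
        have "1 \<le> w P"
          using permutes_in_image[OF w, THEN iffD2, of P] PQ by auto
        then show ?thesis using True ufix PQ by simp
      next
        case False
        have "w P \<le> a + n"
          using permutes_in_image[OF w, THEN iffD2, of P] PQ by auto
        then have "a < u (w P)" using False uhi[of "w P"] by simp
        then show ?thesis using b by simp
      qed
      show "(?P, ?Q) \<in> Inv (a+n) (u \<circ> w \<circ> v)"
        using PN Pm Qm vP wQ wP by (simp add: Inv_def)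
    qed
    have "ninv (a+n) w \<le> ninv (a+n) (u \<circ> w \<circ> v)"
      unfolding ninv_def by (rule card_inj_on_le[OF inj sub finite_Inv])
    then show ?thesis using perm_len_ninv[OF w] perm_len_ninv[OF x] by simp
  qed
  then show "w \<in> minreps (a+n) (mu_comp a n) (lambda_comp a n m)"
    unfolding minreps_def using w by blast
qed

lemma minreps_EE:
  "m \<le> a + n \<Longrightarrow> minreps (a+n) (mu_comp a n) (lambda_comp a n m) = EE (a+n) a m"
  using minreps_sub EE_sub_minreps by blast



lemma EE_mono:
  assumes "w \<in> EE N a m" shows "w \<in> EE (Suc N) a m"
proof -
  have w: "w permutes {1..N}" and
    e: "\<And>p q. 1 \<le> p \<Longrightarrow> p < q \<Longrightarrow> q \<le> N \<Longrightarrow> w q < w p \<Longrightarrow> p \<le> m \<and> m < q \<and> w q \<le> a"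
    using assms by (auto simp: EE_def)
  have w': "w permutes {1..Suc N}" by (rule permutes_subset[OF w]) auto
  have "p \<le> m \<and> m < q \<and> w q \<le> a"
    if pq: "1 \<le> p" "p < q" "q \<le> Suc N" "w q < w p" for p q
  proof (cases "q = Suc N")
    case True
    then have "w q = q" using permutes_not_in[OF w] by simp
    moreover have "w p \<in> {1..N}" using permutes_in_image[OF w, THEN iffD2, of p] pq True by auto
    ultimately show ?thesis using pq True by simp
  next
    case False
    then show ?thesis using e pq by simp
  qed
  then show ?thesis using w' by (simp add: EE_def)
qed

lemma EE_back:
  assumes "w \<in> EE (Suc (a + n)) a m" "m \<le> n" shows "w \<in> EE (a + n) a m"
proof -
  let ?N = "Suc (a + n)"
  have w: "w permutes {1..?N}" and
    e: "\<And>p q. 1 \<le> p \<Longrightarrow> p < q \<Longrightarrow> q \<le> ?N \<Longrightarrow> w q < w p \<Longrightarrow> p \<le> m \<and> m < q \<and> w q \<le> a"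
    using assms by (auto simp: EE_def)
  have fxN: "w ?N = ?N"
  proof (rule ccontr)
    assume ne: "w ?N \<noteq> ?N"
    let ?p = "inv w ?N"
    have wp: "w ?p = ?N" using permutes_inverses[OF w] by simp
    have pin: "?p \<in> {1..?N}"
      using permutes_in_image[OF permutes_inv[OF w], THEN iffD2, of ?N] by simp
    have pne: "?p \<noteq> ?N" using wp ne by auto
    have wN: "w ?N \<in> {1..?N}" using permutes_in_image[OF w, THEN iffD2, of ?N] by simp
    have lt: "w ?N < w ?p" using wp wN ne by auto
    from e[of ?p ?N] pin pne lt have pm: "?p \<le> m" and wNa: "w ?N \<le> a" by auto
    have small: "w q \<le> a" if q: "q \<in> {Suc m..?N}" for q
    proof (cases "q = ?N")
      case True then show ?thesis using wNa by simp
    next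
      case False
      then have qN: "q < ?N" using q by auto
      have "\<not> w ?N < w q"
      proof
        assume "w ?N < w q"
        from e[OF _ qN _ this] q show False by auto
      qed
      then show ?thesis using wNa by simp
    qed
    have inj: "inj_on w {Suc m..?N}" using permutes_inj_on[OF w] .
    have sub: "w ` {Suc m..?N} \<subseteq> {1..a}"
    proof
      fix y assume "y \<in> w ` {Suc m..?N}"
      then obtain q where q: "q \<in> {Suc m..?N}" "y = w q" by blast
      have "w q \<in> {1..?N}" using permutes_in_image[OF w, THEN iffD2, of q] q by auto
      then show "y \<in> {1..a}" using small[OF q(1)] q by auto
    qed
    have "card {Suc m..?N} \<le> card {1..a}" by (rule card_inj_on_le[OF inj sub]) simp
    then show False using assms(2) by simp
  qed
  have w2: "w permutes {1..a+n}"
    by (rule permutes_superset[OF w]) (use fxN in \<open>auto simp: le_Suc_eq\<close>)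
  show ?thesis using w2 e by (auto simp: EE_def)
qed

lemma EE_const: "m \<le> n \<Longrightarrow> EE (a + n) a m = EE (a + m) a m"
proof (induction n rule: dec_induct)
  case base then show ?case by simp
next
  case (step n)
  have "EE (a + Suc n) a m = EE (a + n) a m"
    using EE_mono[of _ "a+n" a m] EE_back[of _ a n m] step(1) by auto
  then show ?case using step.IH by simp
qed

theorem lemma3p3:
  fixes a m :: nat
  shows "(\<forall>n. m \<le> a + n \<longrightarrow>
           minreps (a + n) (mu_comp a n) (lambda_comp a n m)
             \<subseteq> minreps (a + Suc n) (mu_comp a (Suc n)) (lambda_comp a (Suc n) m))
       \<and> (\<forall>n1 n2. m \<le> n1 \<and> m \<le> n2 \<longrightarrow>
           minreps (a + n1) (mu_comp a n1) (lambda_comp a n1 m)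
             = minreps (a + n2) (mu_comp a n2) (lambda_comp a n2 m))"
proof (intro conjI allI impI)
  fix n assume mn: "m \<le> a + n"
  have mn': "m \<le> a + Suc n" using mn by simp
  show "minreps (a + n) (mu_comp a n) (lambda_comp a n m)
             \<subseteq> minreps (a + Suc n) (mu_comp a (Suc n)) (lambda_comp a (Suc n) m)"
    unfolding minreps_EE[OF mn] minreps_EE[OF mn'] using EE_mono[of _ "a+n" a m] by auto
next
  fix n1 n2 assume h: "m \<le> n1 \<and> m \<le> n2"
  then have h1: "m \<le> a + n1" and h2: "m \<le> a + n2" by auto
  show "minreps (a + n1) (mu_comp a n1) (lambda_comp a n1 m)
             = minreps (a + n2) (mu_comp a n2) (lambda_comp a n2 m)"
    unfolding minreps_EE[OF h1] minreps_EE[OF h2] using EE_const h by metis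
qed


end
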